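(* Consider the Com-IC model with GAPs in $\mathbf{Q}^+$ and fixed seed sets $S_\mathcal{A},S_\mathcal{B}$. Fix the live/blocked status of every edge, the thresholds $\alpha^v_\mathcal{A},\alpha^v_\mathcal{B}$ and the coins $\tau_v$ of every node. Then the final sets of $\mathcal{A}$-adopted and $\mathcal{B}$-adopted nodes are the same for every choice of the tie-breaking permutations $\pi_v$, $v\in V$; hence the tie-breaking rule does not affect the outcome in the mutual complementarity case.
   Context: Com-IC model. Let $G=(V,E,p)$ be a directed graph with $p:E\to[0,1]$ and $N^-(v)$ the in-neighbours of $v$. Two items $\mathcal{A},\mathcal{B}$; GAPs $\mathbf{Q}=(q_{\mathcal{A}|\emptyset},q_{\mathcal{A}|\mathcal{B}},q_{\mathcal{B}|\emptyset},q_{\mathcal{B}|\mathcal{A}})\in[0,1]^4$. Given seed sets $S_\mathcal{A},S_\mathcal{B}\subseteq V$, randomness: each edge $(u,v)$ independently live w.p. $p(u,v)$; each node $v$ independently draws $\alpha^v_\mathcal{A},\alpha^v_\mathcal{B}$ uniform on $[0,1]$, a uniformly random permutation $\pi_v$ of $N^-(v)$, and a fair coin $\tau_v\in\{\mathcal{A},\mathcal{B}\}$. For each item $X$ each node is $X$-idle, $X$-suspended, $X$-adopted or $X$-rejected; initially all idle. At step $0$ nodes of $S_\mathcal{A}$ become $\mathcal{A}$-adopted and nodes of $S_\mathcal{B}$ become $\mathcal{B}$-adopted (order for nodes in both given by $\tau_v$). At step $t\ge1$, $v$ is informed of $X$ by in-neighbour $u$ if $(u,v)$ is live and $u$ adopted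 $X$ at step $t-1$; informing in-neighbours are processed in order $\pi_v$ (an in-neighbour that adopted both items is processed for both, in its adoption order). When $v$ is informed of $X$ ($Y$ the other item) while $X$-idle: if $Y$-adopted, $v$ becomes $X$-adopted if $\alpha^v_X\le q_{X|Y}$, else $X$-rejected; otherwise $X$-adopted if $\alpha^v_X\le q_{X|\emptyset}$, else $X$-suspended. Informing a non-$X$-idle node of $X$ has no effect. Reconsideration: when an $X$-suspended node becomes $Y$-adopted, it becomes $X$-adopted if $\alpha^v_X\le q_{X|Y}$, else $X$-rejected. The process stops when nothing changes. $\mathbf{Q}^+$: $q_{\mathcal{A}|\emptyset}\le q_{\mathcal{A}|\mathcal{B}}$ and $q_{\mathcal{B}|\emptyset}\le q_{\mathcal{B}|\mathcal{A}}$. *)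

theory Defs
  imports Complex_Main
begin

datatype item = IA | IB

fun other :: "item \<Rightarrow> item" where
  "other IA = IB" | "other IB = IA"

datatype status = Idle | Suspended | Adopted | Rejected

text \<open>GAPs Q = (q_{A|0}, q_{A|B}, q_{B|0}, q_{B|A}).\<close>
type_synonym gaps = "real \<times> real \<times> real \<times> real"

fun qnull :: "gaps \<Rightarrow> item \<Rightarrow> real" where
  "qnull (a0, ab, b0, ba) IA = a0" | "qnull (a0, ab, b0, ba) IB = b0"

fun qcond :: "gaps \<Rightarrow> item \<Rightarrow> real" where
  "qcond (a0, ab, b0, ba) IA = ab" | "qcond (a0, ab, b0, ba) IB = ba"

definition gaps_valid :: "gaps \<Rightarrow> bool" where
  "gaps_valid Q \<longleftrightarrow> (\<forall>X. 0 \<le> qnull Q X \<and> qnull Q X \<le> 1 \<and> 0 \<le> qcond Q X \<and> qcond Q X \<le> 1)"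

definition Qplus :: "gaps \<Rightarrow> bool" where
  "Qplus Q \<longleftrightarrow> qnull Q IA \<le> qcond Q IA \<and> qnull Q IB \<le> qcond Q IB"

text \<open>Local state of a node: item statuses, plus the list (in order) of items it adopted
in the current step.\<close>

definition inform :: "gaps \<Rightarrow> (item \<Rightarrow> real) \<Rightarrow> item
    \<Rightarrow> (item \<Rightarrow> status) \<times> item list \<Rightarrow> (item \<Rightarrow> status) \<times> item list" where
  "inform Q al X s =
     (let st = fst s; nl = snd s; Y = other X in
      if st X \<noteq> Idle then s
      else if st Y = Adopted then
        (if al X \<le> qcond Q X then (st(X := Adopted), nl @ [X]) else (st(X := Rejected), nl))
      else if al X \<le> qnull Q X then
        (if st Y = Suspended then
           (if al Y \<le> qcond Q Y then (st(X := Adopted, Y := Adopted), nl @ [X, Y])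
            else (st(X := Adopted, Y := Rejected), nl @ [X]))
         else (st(X := Adopted), nl @ [X]))
      else (st(X := Suspended), nl))"

type_synonym 'v state = "('v \<Rightarrow> item \<Rightarrow> status) \<times> ('v \<Rightarrow> item list)"

definition init_state :: "'v set \<Rightarrow> 'v set \<Rightarrow> ('v \<Rightarrow> item) \<Rightarrow> 'v state" where
  "init_state SA SB tau =
     ((\<lambda>v X. if (X = IA \<and> v \<in> SA) \<or> (X = IB \<and> v \<in> SB) then Adopted else Idle),
      (\<lambda>v. if v \<in> SA \<and> v \<in> SB then [tau v, other (tau v)]
           else if v \<in> SA then [IA] else if v \<in> SB then [IB] else []))"

text \<open>Informing events at v in a step: in-neighbours in order prm v, via live edges, each
contributing the items it adopted in the previous step, in adoption order.\<close>
definition events :: "('v \<times> 'v) set \<Rightarrow> ('v \<Rightarrow> 'v list) \<Rightarrow> ('v \<Rightarrow> item list) \<Rightarrow> 'v \<Rightarrow> item list" where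
  "events L prm prev v = concat (map (\<lambda>u. if (u, v) \<in> L then prev u else []) (prm v))"

definition node_step :: "gaps \<Rightarrow> ('v \<Rightarrow> item \<Rightarrow> real) \<Rightarrow> ('v \<times> 'v) set \<Rightarrow> ('v \<Rightarrow> 'v list)
    \<Rightarrow> 'v state \<Rightarrow> 'v \<Rightarrow> (item \<Rightarrow> status) \<times> item list" where
  "node_step Q alpha L prm s v =
     fold (inform Q (alpha v)) (events L prm (snd s) v) (fst s v, [])"

definition step :: "gaps \<Rightarrow> ('v \<Rightarrow> item \<Rightarrow> real) \<Rightarrow> ('v \<times> 'v) set \<Rightarrow> ('v \<Rightarrow> 'v list)
    \<Rightarrow> 'v state \<Rightarrow> 'v state" where
  "step Q alpha L prm s =
     ((\<lambda>v. fst (node_step Q alpha L prm s v)), (\<lambda>v. snd (node_step Q alpha L prm s v)))"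

definition run :: "gaps \<Rightarrow> ('v \<Rightarrow> item \<Rightarrow> real) \<Rightarrow> ('v \<times> 'v) set \<Rightarrow> ('v \<Rightarrow> item)
    \<Rightarrow> ('v \<Rightarrow> 'v list) \<Rightarrow> 'v set \<Rightarrow> 'v set \<Rightarrow> nat \<Rightarrow> 'v state" where
  "run Q alpha L tau prm SA SB t = (step Q alpha L prm ^^ t) (init_state SA SB tau)"

text \<open>Final set of X-adopted nodes: adoption is permanent, so these are the nodes
X-adopted at some step.\<close>
definition final_adopted :: "'v set \<Rightarrow> gaps \<Rightarrow> ('v \<Rightarrow> item \<Rightarrow> real) \<Rightarrow> ('v \<times> 'v) set
    \<Rightarrow> ('v \<Rightarrow> item) \<Rightarrow> ('v \<Rightarrow> 'v list) \<Rightarrow> 'v set \<Rightarrow> 'v set \<Rightarrow> item \<Rightarrow> 'v set" where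
  "final_adopted V Q alpha L tau prm SA SB X =
     {v \<in> V. \<exists>t. fst (run Q alpha L tau prm SA SB t) v X = Adopted}"

definition in_nbrs :: "('v \<times> 'v) set \<Rightarrow> 'v \<Rightarrow> 'v set" where
  "in_nbrs E v = {u. (u, v) \<in> E}"

definition valid_tiebreak :: "'v set \<Rightarrow> ('v \<times> 'v) set \<Rightarrow> ('v \<Rightarrow> 'v list) \<Rightarrow> bool" where
  "valid_tiebreak V E prm \<longleftrightarrow> (\<forall>v\<in>V. distinct (prm v) \<and> set (prm v) = in_nbrs E v)"

end

theory Submission imports Defs begin

definition eqv :: "(item \<Rightarrow> status) \<times> item list \<Rightarrow> (item \<Rightarrow> status) \<times> item list \<Rightarrow> bool" where
  "eqv s s' \<longleftrightarrow> fst s = fst s' \<and> set (snd s) = set (snd s')"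

lemma eqv_refl: "eqv s s" by (simp add: eqv_def)
lemma eqv_trans: "eqv s t \<Longrightarrow> eqv t u \<Longrightarrow> eqv s u" by (simp add: eqv_def)

lemma inform_eqv: "eqv s s' \<Longrightarrow> eqv (inform Q a X s) (inform Q a X s')"
  by (cases s; cases s') (auto simp: eqv_def inform_def Let_def)

lemma fold_eqv: "eqv s s' \<Longrightarrow> eqv (fold (inform Q a) xs s) (fold (inform Q a) xs s')"
proof (induction xs arbitrary: s s')
  case Nil then show ?case by simp
next
  case (Cons x xs) then show ?case by (simp add: inform_eqv)
qed

lemma other_ne: "other X \<noteq> X" by (cases X) auto

lemma inform_idem: "inform Q a X (inform Q a X s) = inform Q a X s"
  apply (cases s)
  apply (cases X)
  apply (auto simp: inform_def Let_def)
  done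

lemma inform_comm: "Qplus Q \<Longrightarrow> eqv (inform Q a IA (inform Q a IB s)) (inform Q a IB (inform Q a IA s))"
  apply (cases s)
  apply (auto simp: inform_def Let_def eqv_def Qplus_def fun_eq_iff split: item.splits)
  done


definition canon :: "item set \<Rightarrow> item list" where
  "canon S = (if IA \<in> S then [IA] else []) @ (if IB \<in> S then [IB] else [])"

lemma key: "Qplus Q \<Longrightarrow> eqv (fold (inform Q a) (canon S) (inform Q a x s)) (fold (inform Q a) (canon (insert x S)) s)"
proof -
  assume q: "Qplus Q"
  have c: "eqv (inform Q a IB (inform Q a IA s)) (inform Q a IA (inform Q a IB s))"
    using inform_comm[OF q, of a s] by (simp add: eqv_def)
  have c2: "eqv (inform Q a IB (inform Q a IA (inform Q a IB s))) (inform Q a IB (inform Q a IA s))"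
    using inform_eqv[OF inform_comm[OF q, of a s], of Q a IB] by (simp add: inform_idem)
  show ?thesis
    by (cases x; cases "IA \<in> S"; cases "IB \<in> S")
      (auto simp: canon_def inform_idem eqv_refl insert_absorb c c2 inform_comm[OF q])
qed

lemma fold_canon: "Qplus Q \<Longrightarrow> eqv (fold (inform Q a) xs s) (fold (inform Q a) (canon (set xs)) s)"
proof (induction xs arbitrary: s)
  case Nil then show ?case by (simp add: canon_def eqv_refl)
next
  case (Cons x xs)
  have "eqv (fold (inform Q a) xs (inform Q a x s)) (fold (inform Q a) (canon (set xs)) (inform Q a x s))"
    using Cons.IH[OF Cons.prems] .
  then show ?case using key[OF Cons.prems, where S="set xs" and x=x and s=s and a=a]
    by (simp add: eqv_def)
qed

lemma fold_set: "Qplus Q \<Longrightarrow> set xs = set ys \<Longrightarrow> eqv (fold (inform Q a) xs s) (fold (inform Q a) ys s)"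
  using fold_canon[of Q a xs s] fold_canon[of Q a ys s]
  by (metis eqv_def)

lemma run_inv:
  assumes "E \<subseteq> V \<times> V" and "Qplus Q"
    and "valid_tiebreak V E prm" and "valid_tiebreak V E prm'"
  shows "\<forall>v\<in>V. fst (run Q alpha L tau prm SA SB t) v = fst (run Q alpha L tau prm' SA SB t) v
     \<and> set (snd (run Q alpha L tau prm SA SB t) v) = set (snd (run Q alpha L tau prm' SA SB t) v)"
proof (induction t)
  case 0 then show ?case by (simp add: run_def)
next
  case (Suc t)
  define r where "r = run Q alpha L tau prm SA SB t"
  define r' where "r' = run Q alpha L tau prm' SA SB t"
  have IH: "\<forall>v\<in>V. fst r v = fst r' v \<and> set (snd r v) = set (snd r' v)"
    using Suc.IH by (simp add: r_def r'_def)
  have rs: "run Q alpha L tau prm SA SB (Suc t) = step Q alpha L prm r"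
    "run Q alpha L tau prm' SA SB (Suc t) = step Q alpha L prm' r'"
    by (simp_all add: r_def r'_def run_def)
  show ?case unfolding rs
  proof
    fix v assume v: "v \<in> V"
    have p: "set (prm v) = in_nbrs E v" "set (prm' v) = in_nbrs E v"
      using assms(3,4) v by (auto simp: valid_tiebreak_def)
    have nv: "u \<in> V" if "u \<in> in_nbrs E v" for u
      using that assms(1) by (auto simp: in_nbrs_def)
    have ev: "set (events L prm (snd r) v) = set (events L prm' (snd r') v)"
      unfolding events_def set_concat set_map p
      using IH nv by (auto split: if_splits)
    have "eqv (node_step Q alpha L prm r v) (node_step Q alpha L prm' r' v)"
      unfolding node_step_def using IH v fold_set[OF assms(2) ev] by simp
    then show "fst (step Q alpha L prm r) v = fst (step Q alpha L prm' r') v \<and>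
      set (snd (step Q alpha L prm r) v) = set (snd (step Q alpha L prm' r') v)"
      by (simp add: step_def eqv_def)
  qed
qed

theorem lemma2:
  fixes V :: "'v set" and E L :: "('v \<times> 'v) set" and Q :: gaps
    and alpha :: "'v \<Rightarrow> item \<Rightarrow> real" and tau :: "'v \<Rightarrow> item"
    and SA SB :: "'v set" and prm prm' :: "'v \<Rightarrow> 'v list"
  assumes "finite V" and "E \<subseteq> V \<times> V" and "L \<subseteq> E"
    and "gaps_valid Q" and "Qplus Q"
    and "SA \<subseteq> V" and "SB \<subseteq> V"
    and "\<forall>v\<in>V. \<forall>X. 0 \<le> alpha v X \<and> alpha v X \<le> 1"
    and "valid_tiebreak V E prm" and "valid_tiebreak V E prm'"
  shows "final_adopted V Q alpha L tau prm SA SB IA = final_adopted V Q alpha L tau prm' SA SB IA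
       \<and> final_adopted V Q alpha L tau prm SA SB IB = final_adopted V Q alpha L tau prm' SA SB IB"
  using run_inv[OF assms(2,5,9,10), of alpha L tau SA SB]
  unfolding final_adopted_def by auto

end
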